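(* Let $d\ge2$ be an integer and $N_1,\dots,N_d$ positive integers. Let $X\subseteq[N_1]\times\cdots\times[N_d]$, and let $\mathbf{b}=(b_1,\dots,b_d)\in\mathbb{Z}^d\setminus\{\mathbf{0}\}$ with $\lambda=\lambda(\mathbf{b}):=\max_{1\le i\le d}\frac{|b_i|}{\gcd(b_1,\dots,b_d)N_i}\le1$. Let $s^*\le s\le\min_iN_i$ be positive integers. Suppose $f_{\mathbf{b}}:\mathbb{Z}^d\to\mathbb{Z}^{d-1}$ is a map of the form $f_{\mathbf{b}}(\mathbf{x})=M\mathbf{x}+\mathbf{v}$ ($M\in\mathbb{Z}^{(d-1)\times d}$, $\mathbf{v}\in\mathbb{Z}^{d-1}$) such that for all $\mathbf{x}_1,\mathbf{x}_2\in\mathbb{Z}^d$, $f_{\mathbf{b}}(\mathbf{x}_1)=f_{\mathbf{b}}(\mathbf{x}_2)$ iff $\mathbf{x}_1-\mathbf{x}_2=k\mathbf{b}$ for some $k\in\mathbb{Q}$, and let $\mathbf{b}'\in\mathbb{Z}^d$ satisfy $f_{\mathbf{b}}(\mathbf{b}')\ne f_{\mathbf{b}}(\mathbf{0})$. Then \[ |U^d(X,\mathbf{b},s)\cap U^d(X,\mathbf{b}',s)|\le\frac{s^*-1}{s}|U^d(X,\mathbf{b}',s)|+\frac2\lambda\big|U^{d-1}\big(f_{\mathbf{b}}(U^d(X,\mathbf{b},s)),\,f_{\mathbf{b}}(\mathbf{b}')-f_{\mathbf{b}}(\mathbf{0}),\,s^*\big)\big|. \]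
   Context: $[N]=\{1,\dots,N\}$. For $n\ge1$, a finite set $Y\subseteq\mathbb{Z}^n$, $\mathbf{c}\in\mathbb{Z}^n\setminus\{\mathbf{0}\}$ and a positive integer $r$: points $\mathbf{y},\mathbf{y}'$ are congruent mod $\mathbf{c}$ if $\mathbf{y}-\mathbf{y}'\in\mathbb{Z}\mathbf{c}$, and $U^n(Y,\mathbf{c},r)$ is the set of $\mathbf{y}\in Y$ with $|\{\mathbf{y}'\in Y:\mathbf{y}'\equiv\mathbf{y}\pmod{\mathbf{c}}\}|\ge r$. (If $\mathbf{b}'=\mathbf{0}$ is allowed by the hypothesis it cannot occur, since then $f_{\mathbf{b}}(\mathbf{b}')=f_{\mathbf{b}}(\mathbf{0})$.) *)

theory Defs
  imports Complex_Main
begin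

text \<open>Points of Z^n are represented as functions nat => int; only the
components with index < n are meaningful (we require the others to be 0 where
relevant). Coordinate i (0-based) corresponds to coordinate i+1 of the paper.\<close>

definition zvec :: "nat \<Rightarrow> (nat \<Rightarrow> int) \<Rightarrow> bool" where
  "zvec n x \<longleftrightarrow> (\<forall>i\<ge>n. x i = 0)"

definition cong_vec :: "nat \<Rightarrow> (nat \<Rightarrow> int) \<Rightarrow> (nat \<Rightarrow> int) \<Rightarrow> (nat \<Rightarrow> int) \<Rightarrow> bool" where
  "cong_vec n c y y' \<longleftrightarrow> (\<exists>k::int. \<forall>i<n. y i - y' i = k * c i)"

definition U :: "nat \<Rightarrow> (nat \<Rightarrow> int) set \<Rightarrow> (nat \<Rightarrow> int) \<Rightarrow> nat \<Rightarrow> (nat \<Rightarrow> int) set" where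
  "U n Y c r = {y \<in> Y. r \<le> card {y' \<in> Y. cong_vec n c y' y}}"

definition affine_map :: "nat \<Rightarrow> (nat \<Rightarrow> nat \<Rightarrow> int) \<Rightarrow> (nat \<Rightarrow> int) \<Rightarrow> (nat \<Rightarrow> int) \<Rightarrow> (nat \<Rightarrow> int)" where
  "affine_map d M v x = (\<lambda>j. if j < d - 1 then (\<Sum>i<d. M j i * x i) + v j else 0)"

definition lam :: "nat \<Rightarrow> (nat \<Rightarrow> nat) \<Rightarrow> (nat \<Rightarrow> int) \<Rightarrow> real" where
  "lam d N b = Max ((\<lambda>i. \<bar>real_of_int (b i)\<bar> / (real_of_int (Gcd (b ` {..<d})) * real (N i))) ` {..<d})"

end

theory Submission
  imports Defs "HOL-Library.FuncSet"
begin

lemma cong_refl: "cong_vec n c y y"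
  unfolding cong_vec_def by (rule exI[of _ 0]) simp

lemma cong_sym: "cong_vec n c y y' \<Longrightarrow> cong_vec n c y' y"
proof -
  assume "cong_vec n c y y'"
  then obtain k where k: "\<forall>i<n. y i - y' i = k * c i" unfolding cong_vec_def by blast
  have "\<forall>i<n. y' i - y i = (- k) * c i"
  proof (intro allI impI)
    fix i assume "i < n"
    then have "y i - y' i = k * c i" using k by blast
    then show "y' i - y i = (- k) * c i" by simp
  qed
  then show ?thesis unfolding cong_vec_def by blast
qed

lemma cong_trans: "cong_vec n c x y \<Longrightarrow> cong_vec n c y z \<Longrightarrow> cong_vec n c x z"
proof -
  assume "cong_vec n c x y" "cong_vec n c y z"
  then obtain k1 k2 where "\<forall>i<n. x i - y i = k1 * c i" "\<forall>i<n. y i - z i = k2 * c i"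
    unfolding cong_vec_def by blast
  then have "\<forall>i<n. x i - z i = (k1 + k2) * c i"
  proof (intro allI impI)
    fix i assume i: "i < n"
    have "x i - z i = (x i - y i) + (y i - z i)" by simp
    also have "\<dots> = k1 * c i + k2 * c i" using i \<open>\<forall>i<n. x i - y i = k1 * c i\<close> \<open>\<forall>i<n. y i - z i = k2 * c i\<close> by simp
    also have "\<dots> = (k1 + k2) * c i" by (simp add: distrib_right)
    finally show "x i - z i = (k1 + k2) * c i" .
  qed
  then show ?thesis unfolding cong_vec_def by blast
qed

lemma finite_box:
  "finite {x::nat\<Rightarrow>int. zvec d x \<and> (\<forall>i<d. 1 \<le> x i \<and> x i \<le> int (N i))}"
  (is "finite ?S")
proof -
  have inj: "inj_on (\<lambda>x. restrict x {..<d}) ?S"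
  proof (rule inj_onI)
    fix x y :: "nat \<Rightarrow> int" assume x: "x \<in> ?S" and y: "y \<in> ?S" and e: "restrict x {..<d} = restrict y {..<d}"
    show "x = y"
    proof
      fix i show "x i = y i"
      proof (cases "i < d")
        case True then show ?thesis using fun_cong[OF e, of i] by simp
      next
        case False then show ?thesis using x y by (simp add: zvec_def)
      qed
    qed
  qed
  have "(\<lambda>x. restrict x {..<d}) ` ?S \<subseteq> PiE {..<d} (\<lambda>i. {1..int (N i)})"
    by (intro image_subsetI) (auto simp: restrict_PiE_iff)
  then have "finite ((\<lambda>x. restrict x {..<d}) ` ?S)"
    by (rule finite_subset) (simp add: finite_PiE)
  then show ?thesis using inj finite_imageD by blast
qed

lemma rat_int_mult:
  fixes x b :: "nat \<Rightarrow> int" and q :: rat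
  assumes h: "\<forall>i<d. of_int (x i) = q * of_int (b i)"
  shows "\<exists>k. \<forall>i<d. x i = k * (b i div Gcd (b ` {..<d}))"
proof -
  obtain r t where rt: "quotient_of q = (r, t)" by (cases "quotient_of q") auto
  have t: "t > 0" using quotient_of_denom_pos[OF rt] .
  have cop: "coprime t r" using quotient_of_coprime[OF rt] by (simp add: coprime_commute)
  have q: "q = of_int r / of_int t" using quotient_of_div[OF rt] .
  have eq: "x i * t = r * b i" if "i < d" for i
  proof -
    have "of_int (x i) = of_int r / of_int t * (of_int (b i) :: rat)" using h that q by simp
    then have "of_int (x i) * of_int t = (of_int r * of_int (b i) :: rat)" using t by (simp add: field_simps)
    then show ?thesis by (metis of_int_eq_iff of_int_mult)
  qed
  define g where "g = Gcd (b ` {..<d})"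
  have "t dvd b i" if "i < d" for i
  proof -
    have "t dvd r * b i" using eq[OF that] by (metis dvd_triv_right)
    then show ?thesis using cop coprime_dvd_mult_right_iff by blast
  qed
  then have "t dvd g" unfolding g_def by (auto intro: Gcd_greatest)
  then obtain e where e: "g = t * e" by (auto simp: dvd_def)
  have "x i = (r * e) * (b i div g)" if "i < d" for i
  proof -
    have gd: "g dvd b i" unfolding g_def using that by (auto intro: Gcd_dvd)
    have "b i = g * (b i div g)" using gd by simp
    then have "x i * t = (r * e * (b i div g)) * t" using eq[OF that] e by (simp add: ac_simps)
    then show ?thesis using t by simp
  qed
  then show ?thesis unfolding g_def by blast
qed

lemma dc:
  fixes R :: "'a \<Rightarrow> 'a \<Rightarrow> bool"
  assumes fin: "finite X" and PB: "P \<subseteq> B" and BX: "B \<subseteq> X"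
    and h1: "\<forall>y\<in>P. s \<le> card {z\<in>X. R z y}"
    and h2: "\<forall>z\<in>X. (\<exists>y\<in>P. R z y) \<longrightarrow> z \<in> B"
    and h3: "\<forall>z\<in>B. card {y\<in>P. R z y} \<le> m"
  shows "card P * s \<le> card B * m"
proof -
  have finP: "finite P" and finB: "finite B" using fin PB BX finite_subset by blast+
  have "card P * s = (\<Sum>y\<in>P. s)" by simp
  also have "\<dots> \<le> (\<Sum>y\<in>P. card {z\<in>X. R z y})" using h1 by (intro sum_mono) auto
  also have "\<dots> = (\<Sum>y\<in>P. \<Sum>z\<in>X. if R z y then 1 else 0)"
    using fin by (intro sum.cong refl) (simp add: sum.inter_filter[symmetric])
  also have "\<dots> = (\<Sum>z\<in>X. \<Sum>y\<in>P. if R z y then 1 else 0)" by (rule sum.swap)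
  also have "\<dots> = (\<Sum>z\<in>X. card {y\<in>P. R z y})"
    using finP by (intro sum.cong refl) (simp add: sum.inter_filter[symmetric])
  also have "\<dots> = (\<Sum>z\<in>B. card {y\<in>P. R z y})"
  proof (rule sum.mono_neutral_right[OF fin BX])
    show "\<forall>i\<in>X - B. card {y \<in> P. R i y} = 0" using h2 finP by auto
  qed
  also have "\<dots> \<le> (\<Sum>z\<in>B. m)" using h3 by (intro sum_mono) auto
  also have "\<dots> = card B * m" by simp
  finally show ?thesis .
qed

lemma lam_props:
  assumes N: "\<forall>i<d. N i > 0" and b: "\<exists>i<d. b i \<noteq> 0"
  shows "\<exists>i0<d. lam d N b = \<bar>real_of_int (b i0)\<bar> / (real_of_int (Gcd (b ` {..<d})) * real (N i0))
     \<and> b i0 \<noteq> 0 \<and> lam d N b > 0 \<and> Gcd (b ` {..<d}) > 0"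
proof -
  define g where "g = Gcd (b ` {..<d})"
  obtain j where j: "j < d" "b j \<noteq> 0" using b by blast
  have "g \<noteq> 0" unfolding g_def using j by auto
  moreover have "g \<ge> 0" unfolding g_def by simp
  ultimately have gpos: "g > 0" by simp
  define h where "h i = \<bar>real_of_int (b i)\<bar> / (real_of_int g * real (N i))" for i
  have lamh: "lam d N b = Max (h ` {..<d})" unfolding lam_def h_def g_def by simp
  have fin: "finite (h ` {..<d})" by simp
  have ne: "h ` {..<d} \<noteq> {}" using j by auto
  obtain i0 where i0: "i0 < d" "lam d N b = h i0" using Max_in[OF fin ne] lamh by auto
  have "h j > 0" unfolding h_def using j gpos N by (intro divide_pos_pos mult_pos_pos) auto
  moreover have "h j \<le> lam d N b" unfolding lamh using fin j by (auto intro: Max_ge)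
  ultimately have lp: "lam d N b > 0" by simp
  have bi0: "b i0 \<noteq> 0"
  proof
    assume "b i0 = 0"
    then have "h i0 = 0" unfolding h_def by simp
    then show False using lp i0(2) by simp
  qed
  have e: "lam d N b = \<bar>real_of_int (b i0)\<bar> / (real_of_int (Gcd (b ` {..<d})) * real (N i0))"
    using i0(2) unfolding h_def g_def .
  have gp: "Gcd (b ` {..<d}) > 0" using gpos unfolding g_def .
  show ?thesis using i0(1) e bi0 lp gp by blast
qed

lemma fiber:
  fixes F :: "(nat \<Rightarrow> int) set"
  assumes X: "\<forall>x\<in>X. zvec d x \<and> (\<forall>i<d. 1 \<le> x i \<and> x i \<le> int (N i))"
    and N: "\<forall>i<d. N i > 0"
    and b: "\<exists>i<d. b i \<noteq> 0"
    and lam: "lam d N b \<le> 1"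
    and f: "\<forall>x1 x2. affine_map d M v x1 = affine_map d M v x2 \<longleftrightarrow>
              (\<exists>k::rat. \<forall>i<d. of_int (x1 i - x2 i) = k * of_int (b i))"
    and FX: "F \<subseteq> X" and Fw: "\<forall>y\<in>F. affine_map d M v y = w"
  shows "real (card F) \<le> 2 / lam d N b"
proof -
  define g where "g = Gcd (b ` {..<d})"
  obtain i0 where i0: "i0 < d" "lam d N b = \<bar>real_of_int (b i0)\<bar> / (real_of_int g * real (N i0))"
    "b i0 \<noteq> 0" "lam d N b > 0" "g > 0"
    using lam_props[OF N b] unfolding g_def by blast
  have "finite X" using finite_subset[OF _ finite_box[of d N]] X by blast
  then have finF: "finite F" using FX finite_subset by blast
  show ?thesis
  proof (cases "F = {}")
    case True then show ?thesis using i0 by simp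
  next
    case False
    then obtain y0 where y0: "y0 \<in> F" by blast
    have "\<forall>y\<in>F. \<exists>k. \<forall>i<d. y i - y0 i = k * (b i div g)"
    proof
      fix y assume y: "y \<in> F"
      then have "affine_map d M v y = affine_map d M v y0" using Fw y0 by simp
      then obtain q :: rat where "\<forall>i<d. of_int (y i - y0 i) = q * of_int (b i)" using f by blast
      from rat_int_mult[of d "\<lambda>i. y i - y0 i", OF this] show "\<exists>k. \<forall>i<d. y i - y0 i = k * (b i div g)"
        unfolding g_def by simp
    qed
    then have "\<exists>kf. \<forall>y\<in>F. \<forall>i<d. y i - y0 i = kf y * (b i div g)" by (rule bchoice)
    then obtain kf where kf: "\<forall>y\<in>F. \<forall>i<d. y i - y0 i = kf y * (b i div g)" by blast
    define \<beta> where "\<beta> = b i0 div g"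
    have gd: "g dvd b i0" unfolding g_def using i0 by (auto intro: Gcd_dvd)
    then have b\<beta>: "b i0 = g * \<beta>" unfolding \<beta>_def by simp
    have \<beta>0: "\<beta> \<noteq> 0" using b\<beta> i0 by auto
    have inj: "inj_on kf F"
    proof (rule inj_onI)
      fix y y' assume y: "y \<in> F" and y': "y' \<in> F" and e: "kf y = kf y'"
      show "y = y'"
      proof
        fix i show "y i = y' i"
        proof (cases "i < d")
          case True
          have "y i - y0 i = y' i - y0 i" using kf y y' e True by simp
          then show ?thesis by simp
        next
          case False
          have "y \<in> X" "y' \<in> X" using FX y y' by auto
          then have "zvec d y" "zvec d y'" using X by auto
          then show ?thesis using False by (simp add: zvec_def)
        qed
      qed
    qed
    define K where "K = kf ` F"
    have cardK: "card F = card K" unfolding K_def using card_image[OF inj] by simp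
    have finK: "finite K" "K \<noteq> {}" unfolding K_def using finF False by auto
    have Kb: "1 \<le> y0 i0 + k * \<beta> \<and> y0 i0 + k * \<beta> \<le> int (N i0)" if kK: "k \<in> K" for k
    proof -
      obtain y where y: "y \<in> F" "k = kf y" using kK unfolding K_def by blast
      have "y i0 - y0 i0 = k * \<beta>" using kf y i0 unfolding \<beta>_def by simp
      then have "y i0 = y0 i0 + k * \<beta>" by simp
      moreover have "1 \<le> y i0 \<and> y i0 \<le> int (N i0)" using X FX y i0 by blast
      ultimately show ?thesis by simp
    qed
    define a where "a = Min K"
    define z where "z = Max K"
    have aK: "a \<in> K" and zK: "z \<in> K" unfolding a_def z_def using finK by auto
    have az: "a \<le> z" unfolding a_def z_def using finK by auto
    have "K \<subseteq> {a..z}" unfolding a_def z_def using finK by auto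
    then have "card K \<le> card {a..z}" by (rule card_mono[rotated]) simp
    then have c1: "real (card F) \<le> real_of_int (z - a) + 1" using cardK az by simp
    have "\<bar>(y0 i0 + z * \<beta>) - (y0 i0 + a * \<beta>)\<bar> \<le> int (N i0) - 1" using Kb[OF aK] Kb[OF zK] by linarith
    moreover have "\<bar>(y0 i0 + z * \<beta>) - (y0 i0 + a * \<beta>)\<bar> = (z - a) * \<bar>\<beta>\<bar>"
      using az by (simp add: left_diff_distrib[symmetric] abs_mult)
    ultimately have "(z - a) * \<bar>\<beta>\<bar> \<le> int (N i0) - 1" by simp
    then have "real_of_int ((z - a) * \<bar>\<beta>\<bar>) \<le> real_of_int (int (N i0) - 1)"
      by (simp only: of_int_le_iff)
    then have c2: "real_of_int (z - a) * real_of_int \<bar>\<beta>\<bar> \<le> real (N i0) - 1"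
      by simp
    have Npos: "real (N i0) > 0" using N i0 by simp
    have Bpos: "real_of_int \<bar>\<beta>\<bar> > 0" using \<beta>0 by simp
    have lamB: "lam d N b = real_of_int \<bar>\<beta>\<bar> / real (N i0)"
      using i0(2) i0(5) b\<beta> by (simp add: abs_mult)
    have c3: "real_of_int \<bar>\<beta>\<bar> \<le> real (N i0)" using lam lamB Npos by (simp add: divide_le_eq)
    have "real (card F) * real_of_int \<bar>\<beta>\<bar> \<le> 2 * real (N i0)"
    proof -
      have "real (card F) * real_of_int \<bar>\<beta>\<bar> \<le> (real_of_int (z - a) + 1) * real_of_int \<bar>\<beta>\<bar>"
        by (rule mult_right_mono[OF c1 less_imp_le[OF Bpos]])
      also have "\<dots> = real_of_int (z - a) * real_of_int \<bar>\<beta>\<bar> + real_of_int \<bar>\<beta>\<bar>"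
        by (rule trans[OF distrib_right], simp only: mult_1_left)
      also have "\<dots> \<le> 2 * real (N i0)" using c2 c3 by linarith
      finally show ?thesis .
    qed
    moreover have eq2: "2 / lam d N b = 2 * real (N i0) / real_of_int \<bar>\<beta>\<bar>"
      unfolding lamB by (rule divide_divide_eq_right)
    ultimately show ?thesis unfolding eq2 by (subst pos_le_divide_eq[OF Bpos])
  qed
qed


theorem lemma4p8:
  fixes d :: nat and N :: "nat \<Rightarrow> nat" and X :: "(nat \<Rightarrow> int) set"
    and b b' :: "nat \<Rightarrow> int" and s s' :: nat
    and M :: "nat \<Rightarrow> nat \<Rightarrow> int" and v :: "nat \<Rightarrow> int"
  assumes d: "d \<ge> 2"
    and N: "\<forall>i<d. N i > 0"
    and X: "\<forall>x\<in>X. zvec d x \<and> (\<forall>i<d. 1 \<le> x i \<and> x i \<le> int (N i))"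
    and b: "zvec d b" "\<exists>i<d. b i \<noteq> 0"
    and lam: "lam d N b \<le> 1"
    and s: "0 < s'" "s' \<le> s" "\<forall>i<d. s \<le> N i"
    and v: "zvec (d - 1) v"
    and f: "\<forall>x1 x2. affine_map d M v x1 = affine_map d M v x2 \<longleftrightarrow>
              (\<exists>k::rat. \<forall>i<d. of_int (x1 i - x2 i) = k * of_int (b i))"
    and b': "zvec d b'" "affine_map d M v b' \<noteq> affine_map d M v (\<lambda>_. 0)"
  shows "real (card (U d X b s \<inter> U d X b' s))
    \<le> (real s' - 1) / real s * real (card (U d X b' s))
      + 2 / lam d N b * real (card (U (d - 1) (affine_map d M v ` U d X b s)
           (\<lambda>j. affine_map d M v b' j - affine_map d M v (\<lambda>_. 0) j) s'))"
  proof -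
  define fm where "fm = affine_map d M v"
  define A where "A = U d X b s"
  define B where "B = U d X b' s"
  define c where "c = (\<lambda>j. affine_map d M v b' j - affine_map d M v (\<lambda>_. 0) j)"
  define W where "W = U (d - 1) (fm ` A) c s'"
  define R where "R = cong_vec d b'"
  have finX: "finite X" using finite_subset[OF _ finite_box[of d N]] X by blast
  have AX: "A \<subseteq> X" "B \<subseteq> X" unfolding A_def B_def U_def by auto
  have finA: "finite A" and finB: "finite B" using AX finX finite_subset by blast+
  define P1 where "P1 = {y \<in> A \<inter> B. card {y'\<in>A. R y' y} < s'}"
  define P2 where "P2 = {y \<in> A \<inter> B. s' \<le> card {y'\<in>A. R y' y}}"
  have card_split: "card (A \<inter> B) = card P1 + card P2"
  proof -
    have "A \<inter> B = P1 \<union> P2" "P1 \<inter> P2 = {}" unfolding P1_def P2_def by auto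
    moreover have "finite P1" "finite P2" using finA unfolding P1_def P2_def by auto
    ultimately show ?thesis by (simp add: card_Un_disjoint)
  qed
  have fcong: "cong_vec (d - 1) c (fm y') (fm y)" if r: "R y' y" for y y'
  proof -
    obtain k where k: "\<forall>i<d. y' i - y i = k * b' i" using r unfolding R_def cong_vec_def by blast
    have "fm y' j - fm y j = k * c j" if j: "j < d - 1" for j
    proof -
      have "fm y' j - fm y j = (\<Sum>i<d. M j i * (y' i - y i))"
        using j unfolding fm_def affine_map_def by (simp add: sum_subtractf right_diff_distrib)
      also have "\<dots> = (\<Sum>i<d. k * (M j i * b' i))" using k by (intro sum.cong) (auto simp: ac_simps)
      also have "\<dots> = k * c j" using j unfolding c_def affine_map_def by (simp add: sum_distrib_left)
      finally show ?thesis .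
    qed
    then show ?thesis unfolding cong_vec_def by blast
  qed
  have finj: "y1 = y2" if y1: "y1 \<in> X" and y2: "y2 \<in> X" and r1: "R y1 y" and r2: "R y2 y"
    and e: "fm y1 = fm y2" for y y1 y2
  proof -
    have "R y1 y2" using cong_trans[OF r1[unfolded R_def] cong_sym[OF r2[unfolded R_def]]] unfolding R_def .
    then obtain k where k: "\<forall>i<d. y1 i - y2 i = k * b' i" unfolding R_def cong_vec_def by blast
    obtain q :: rat where q: "\<forall>i<d. of_int (y1 i - y2 i) = q * of_int (b i)"
      using f[rule_format, of y1 y2] e unfolding fm_def by blast
    show "y1 = y2"
    proof (cases "k = 0")
      case True
      have "zvec d y1" "zvec d y2" using X y1 y2 by auto
      show ?thesis
      proof
        fix i show "y1 i = y2 i"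
        proof (cases "i < d")
          case True then show ?thesis using k \<open>k = 0\<close> by auto
        next
          case False then show ?thesis using \<open>zvec d y1\<close> \<open>zvec d y2\<close> by (simp add: zvec_def)
        qed
      qed
    next
      case False
      have "\<forall>i<d. of_int (b' i - (\<lambda>_. 0) i) = (q / of_int k) * (of_int (b i) :: rat)"
      proof (intro allI impI)
        fix i assume i: "i < d"
        have "of_int (y1 i - y2 i) = (of_int (k * b' i) :: rat)" using k i by simp
        then have "of_int k * of_int (b' i) = q * (of_int (b i) :: rat)" using q i by simp
        then show "of_int (b' i - (\<lambda>_. 0) i) = (q / of_int k) * (of_int (b i) :: rat)"
          using False by (simp add: field_simps)
      qed
      then have "affine_map d M v b' = affine_map d M v (\<lambda>_. 0)" using f[rule_format, of b' "\<lambda>_. 0"] by blast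
      then show ?thesis using b'(2) by simp
    qed
  qed
  have p1: "card P1 * s \<le> card B * (s' - 1)"
  proof (rule dc[OF finX _ AX(2), of P1 s R])
    show "P1 \<subseteq> B" unfolding P1_def by auto
    show "\<forall>y\<in>P1. s \<le> card {z \<in> X. R z y}" unfolding P1_def B_def U_def R_def by auto
    show "\<forall>z\<in>X. (\<exists>y\<in>P1. R z y) \<longrightarrow> z \<in> B"
    proof (intro ballI impI)
      fix z assume z: "z \<in> X" and "\<exists>y\<in>P1. R z y"
      then obtain y where y: "y \<in> P1" "R z y" by blast
      have "R z' z \<longleftrightarrow> R z' y" for z'
        using y(2) cong_sym cong_trans unfolding R_def by meson
      then have "{z'\<in>X. R z' z} = {z'\<in>X. R z' y}" by simp
      moreover have "s \<le> card {z'\<in>X. R z' y}" using y(1) unfolding P1_def B_def U_def R_def by auto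
      ultimately show "z \<in> B" using z unfolding B_def U_def R_def by auto
    qed
    show "\<forall>z\<in>B. card {y\<in>P1. R z y} \<le> s' - 1"
    proof
      fix z assume "z \<in> B"
      show "card {y\<in>P1. R z y} \<le> s' - 1"
      proof (cases "\<exists>y1\<in>P1. R z y1")
        case False then have e: "{y\<in>P1. R z y} = {}" by auto
        show ?thesis unfolding e by simp
      next
        case True
        then obtain y1 where y1: "y1 \<in> P1" "R z y1" by blast
        have "R y y1" if "R z y" for y
          using cong_trans[OF cong_sym[OF that[unfolded R_def]] y1(2)[unfolded R_def]] unfolding R_def .
        then have "{y\<in>P1. R z y} \<subseteq> {y'\<in>A. R y' y1}" unfolding P1_def by auto
        then have "card {y\<in>P1. R z y} \<le> card {y'\<in>A. R y' y1}" using finA by (intro card_mono) auto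
        moreover have "card {y'\<in>A. R y' y1} < s'" using y1(1) unfolding P1_def by auto
        ultimately show ?thesis by simp
      qed
    qed
  qed
  have finfA: "finite (fm ` A)" using finA by simp
  have finW: "finite W" unfolding W_def U_def using finfA by auto
  have P2sub: "P2 \<subseteq> (\<Union>w\<in>W. {y\<in>A. fm y = w})"
  proof
    fix y assume y: "y \<in> P2"
    have yA: "y \<in> A" using y unfolding P2_def by auto
    have sub: "fm ` {y'\<in>A. R y' y} \<subseteq> {w'\<in>fm ` A. cong_vec (d - 1) c w' (fm y)}" using fcong by auto
    have inj: "inj_on fm {y'\<in>A. R y' y}"
    proof (rule inj_onI)
      fix y1 y2 assume "y1 \<in> {y'\<in>A. R y' y}" "y2 \<in> {y'\<in>A. R y' y}" "fm y1 = fm y2"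
      then show "y1 = y2" using finj AX by blast
    qed
    have "card {y'\<in>A. R y' y} = card (fm ` {y'\<in>A. R y' y})" using card_image[OF inj] by simp
    also have "\<dots> \<le> card {w'\<in>fm ` A. cong_vec (d - 1) c w' (fm y)}"
      using sub finfA by (intro card_mono) auto
    finally have "s' \<le> card {w'\<in>fm ` A. cong_vec (d - 1) c w' (fm y)}" using y unfolding P2_def by auto
    then have "fm y \<in> W" using yA unfolding W_def U_def by auto
    then show "y \<in> (\<Union>w\<in>W. {y\<in>A. fm y = w})" using yA by auto
  qed
  have p2: "real (card P2) \<le> real (card W) * (2 / lam d N b)"
  proof -
    have "card P2 \<le> card (\<Union>w\<in>W. {y\<in>A. fm y = w})" using P2sub by (intro card_mono[OF finite_subset[OF _ finA]]) auto
    also have "\<dots> \<le> (\<Sum>w\<in>W. card {y\<in>A. fm y = w})" using finW by (rule card_UN_le)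
    finally have "real (card P2) \<le> real (\<Sum>w\<in>W. card {y\<in>A. fm y = w})"
      by (simp only: of_nat_le_iff)
    also have "\<dots> = (\<Sum>w\<in>W. real (card {y\<in>A. fm y = w}))" by simp
    also have "\<dots> \<le> (\<Sum>w\<in>W. 2 / lam d N b)"
    proof (rule sum_mono)
      fix w assume "w \<in> W"
      show "real (card {y\<in>A. fm y = w}) \<le> 2 / lam d N b"
        by (rule fiber[OF X N b(2) lam f, where w = w]) (use AX in \<open>auto simp: fm_def\<close>)
    qed
    finally show ?thesis by simp
  qed
  have spos: "real s > 0" using s by simp
  have "real (card P1 * s) \<le> real (card B * (s' - 1))" using p1 by (simp only: of_nat_le_iff)
  then have "real (card P1) * real s \<le> real (card B) * (real s' - 1)" using s(1) by (simp add: of_nat_diff)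
  then have p1': "real (card P1) \<le> (real s' - 1) / real s * real (card B)"
    using spos by (simp add: field_simps)
  have "real (card (A \<inter> B)) \<le> (real s' - 1) / real s * real (card B) + 2 / lam d N b * real (card W)"
    using card_split p1' p2 by (simp add: mult.commute)
  then show ?thesis unfolding A_def B_def W_def c_def fm_def by simp
qed

end
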